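(* Let $\xi_1,\xi_2,\dots$ be an IID sequence of Bernoulli random variables with probability of success $p\in[0,1]$, and let $\hat p_n:=\frac1n\sum_{i=1}^n\xi_i$. For each $\delta>0$ and $n\ge1$ let \[ I_n:=\Bigl\{p'\in[0,1]:\ |p'-\hat p_{\lfloor\!\lfloor n\rfloor\!\rfloor}|<\sqrt{\frac{2\ln\log_2\lfloor\!\lfloor n\rfloor\!\rfloor+\ln\frac{3.3}{\delta}}{2\lfloor\!\lfloor n\rfloor\!\rfloor}}\Bigr\}, \] with the convention $\ln\log_2 1:=\infty$ (so $I_1=[0,1]$). Then $\mathbb{P}(\forall n\ge1:\ p\in I_n)\ge1-\delta$.
   Context: For an integer $n\ge2$, $\lfloor\!\lfloor n\rfloor\!\rfloor$ denotes the largest integer of the form $2^k$, $k\in\{1,2,\dots\}$, with $2^k\le n$; for $n<2$, $\lfloor\!\lfloor n\rfloor\!\rfloor:=1$. $\log_2$ is the binary logarithm. *)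

theory Defs
  imports "HOL-Probability.Probability"
begin

definition pow2floor :: "nat \<Rightarrow> nat" where
  "pow2floor n = (if n < 2 then 1 else (GREATEST m. (\<exists>k\<ge>1. m = 2 ^ k) \<and> m \<le> n))"

definition phat :: "(nat \<Rightarrow> 'a \<Rightarrow> real) \<Rightarrow> nat \<Rightarrow> 'a \<Rightarrow> real" where
  "phat \<xi> n \<omega> = (\<Sum>i=1..n. \<xi> i \<omega>) / real n"

text \<open>Membership of p' in I_n(omega). For pow2floor n = 1 the radius is infinite
  (convention ln log_2 1 = infinity), so I_n = [0,1].\<close>
definition in_I :: "(nat \<Rightarrow> 'a \<Rightarrow> real) \<Rightarrow> real \<Rightarrow> nat \<Rightarrow> real \<Rightarrow> 'a \<Rightarrow> bool" where
  "in_I \<xi> \<delta> n p' \<omega> \<longleftrightarrow> p' \<in> {0..1} \<and>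
     (let m = pow2floor n in
        m = 1 \<or>
        \<bar>p' - phat \<xi> m \<omega>\<bar> <
          sqrt ((2 * ln (log 2 (real m)) + ln (3.3 / \<delta>)) / (2 * real m)))"

end

theory Submission imports Defs "HOL-Probability.Hoeffding" "HOL-Analysis.Gamma_Function" begin

lemma hoeff:
  fixes M :: "'a measure" and \<xi> :: "nat \<Rightarrow> 'a \<Rightarrow> real" and p :: real
  assumes "prob_space M"
    and "prob_space.indep_vars M (\<lambda>_. borel) \<xi> {1..}"
    and "\<And>i. i \<ge> 1 \<Longrightarrow> \<xi> i \<in> borel_measurable M"
    and "\<And>i. i \<ge> 1 \<Longrightarrow> AE \<omega> in M. \<xi> i \<omega> \<in> {0, 1}"
    and "\<And>i. i \<ge> 1 \<Longrightarrow> measure M {\<omega> \<in> space M. \<xi> i \<omega> = 1} = p"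
    and m: "m \<ge> 1" and e: "\<epsilon> \<ge> 0"
  shows "measure M {\<omega>\<in>space M. \<bar>(\<Sum>i\<in>{1..m}. \<xi> i \<omega>) - real m * p\<bar> \<ge> \<epsilon>}
          \<le> 2 * exp (-2 * \<epsilon>\<^sup>2 / real m)"
proof -
  interpret prob_space M by fact
  interpret H: Hoeffding_ineq M "{1..m}" \<xi> "\<lambda>_. 0" "\<lambda>_. 1" "\<Sum>i\<in>{1..m}. expectation (\<xi> i)"
  proof unfold_locales
    show "indep_vars (\<lambda>_. borel) \<xi> {1..m}"
      by (rule indep_vars_subset[OF assms(2)]) auto
    fix i assume "i \<in> {1..m}"
    then show "AE x in M. \<xi> i x \<in> {0..1}"
      using assms(4)[of i] by (auto elim!: eventually_mono)
  qed auto
  have ex: "expectation (\<xi> i) = p" if "i \<in> {1..m}" for i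
  proof -
    have meas: "{\<omega> \<in> space M. \<xi> i \<omega> = 1} \<in> sets M"
      using assms(3)[of i] that by measurable
    have "expectation (\<xi> i) = expectation (indicator {\<omega> \<in> space M. \<xi> i \<omega> = 1})"
      apply (rule integral_cong_AE)
      using assms(3)[of i] that meas apply measurable
      using assms(4)[of i] that by (auto elim!: eventually_mono simp: indicator_def)
    also have "\<dots> = p" using meas assms(5)[of i] that by simp
    finally show ?thesis .
  qed
  have "(\<Sum>i\<in>{1..m}. expectation (\<xi> i)) = real m * p" using ex by simp
  moreover have "(\<Sum>i\<in>{1..m}. ((1::real) - 0)\<^sup>2) = real m" by simp
  ultimately show ?thesis using H.Hoeffding_ineq_abs_ge[OF e] m by simp
qed

lemma pow2floor_ex: assumes "n \<ge> 2" shows "\<exists>k\<ge>1. pow2floor n = 2^k"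
proof -
  let ?P = "\<lambda>m. (\<exists>k\<ge>1. m = (2::nat) ^ k) \<and> m \<le> n"
  have "?P (Greatest ?P)"
    by (rule GreatestI_nat[of _ 2 n]) (use assms in \<open>auto intro: exI[of _ 1]\<close>)
  thus ?thesis using assms unfolding pow2floor_def by auto
qed

lemma meas_good:
  assumes "\<And>i. i \<ge> 1 \<Longrightarrow> \<xi> i \<in> borel_measurable M"
  shows "{\<omega> \<in> space M. \<forall>n\<ge>1. in_I \<xi> \<delta> n p \<omega>} \<in> sets M"
proof -
  have ph: "phat \<xi> m \<in> borel_measurable M" if "m \<ge> 1" for m
    unfolding phat_def using assms by (intro borel_measurable_divide borel_measurable_sum) auto
  have "{\<omega> \<in> space M. \<forall>n\<ge>1. in_I \<xi> \<delta> n p \<omega>} = (\<Inter>n\<in>{1..}. {\<omega> \<in> space M. in_I \<xi> \<delta> n p \<omega>})"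
    by auto
  also have "\<dots> \<in> sets M"
  proof (intro sets.countable_INT' )
    show "countable {1::nat..}" by simp
    show "{1::nat..} \<noteq> {}" by auto
    show "(\<lambda>n. {\<omega> \<in> space M. in_I \<xi> \<delta> n p \<omega>}) ` {1..} \<subseteq> sets M"
    proof safe
      fix n :: nat
      have pm: "pow2floor n \<ge> 1" unfolding pow2floor_def
        using pow2floor_ex[of n] by (cases "n < 2") (auto simp: pow2floor_def)
      show "{\<omega> \<in> space M. in_I \<xi> \<delta> n p \<omega>} \<in> sets M"
        unfolding in_I_def Let_def using ph[OF pm] by measurable
    qed
  qed
  finally show ?thesis .
qed

theorem proposition2:
  fixes M :: "'a measure" and \<xi> :: "nat \<Rightarrow> 'a \<Rightarrow> real" and p \<delta> :: real
  assumes "prob_space M"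
    and "p \<in> {0..1}"
    and "\<delta> > 0"
    and "prob_space.indep_vars M (\<lambda>_. borel) \<xi> {1..}"
    and "\<And>i. i \<ge> 1 \<Longrightarrow> \<xi> i \<in> borel_measurable M"
    and "\<And>i. i \<ge> 1 \<Longrightarrow> AE \<omega> in M. \<xi> i \<omega> \<in> {0, 1}"
    and "\<And>i. i \<ge> 1 \<Longrightarrow> measure M {\<omega> \<in> space M. \<xi> i \<omega> = 1} = p"
  shows "measure M {\<omega> \<in> space M. \<forall>n\<ge>1. in_I \<xi> \<delta> n p \<omega>} \<ge> 1 - \<delta>"
proof (cases "\<delta> < 1")
  case False
  then show ?thesis by (simp add: order_trans[OF _ measure_nonneg])
next
  case True
  interpret prob_space M by fact
  define G where "G = {\<omega> \<in> space M. \<forall>n\<ge>1. in_I \<xi> \<delta> n p \<omega>}"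
  define c where "c = 3.3 / \<delta>"
  have c1: "c > 1" using True assms(3) by (simp add: c_def field_simps)
  have lnc: "ln c > 0" using c1 by simp
  define r :: "nat \<Rightarrow> real" where "r k = (2 * ln (real k) + ln c) / (2 * 2 ^ k)" for k
  define e where "e k = sqrt (r k)" for k
  define A where "A i = {\<omega>\<in>space M. \<bar>(\<Sum>j\<in>{1..(2::nat)^Suc i}. \<xi> j \<omega>) - real (2^Suc i) * p\<bar>
        \<ge> real (2^Suc i) * e (Suc i)}" for i
  have r0: "r k > 0" if "k \<ge> 1" for k
    using that lnc unfolding r_def by (intro divide_pos_pos add_nonneg_pos) auto
  have Ameas: "A i \<in> sets M" for i
  proof -
    have "(\<lambda>\<omega>. \<Sum>j\<in>{1..(2::nat)^Suc i}. \<xi> j \<omega>) \<in> borel_measurable M"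
      using assms(5) by (intro borel_measurable_sum) auto
    then show ?thesis unfolding A_def by measurable
  qed
  have Abound: "prob (A i) \<le> (2 / 3.3 * \<delta>) * (1 / (real i + 1)\<^sup>2)" for i
  proof -
    let ?m = "(2::nat)^Suc i"
    have "prob (A i) \<le> 2 * exp (-2 * (real ?m * e (Suc i))\<^sup>2 / real ?m)"
      unfolding A_def
      by (rule hoeff[OF assms(1,4,5,6,7)]) (use r0[of "Suc i"] in \<open>auto simp: e_def\<close>)
    also have "-2 * (real ?m * e (Suc i))\<^sup>2 / real ?m = -(2 * ln (real (Suc i)) + ln c)"
      using r0[of "Suc i"] unfolding e_def
      by (simp add: power_mult_distrib r_def field_simps power2_eq_square)
    also have "exp (-(2 * ln (real (Suc i)) + ln c)) = 1 / ((real i + 1)\<^sup>2 * c)"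
    proof -
      have "exp (2 * ln (real (Suc i))) = (real i + 1)\<^sup>2"
      proof -
        have "exp (2 * ln (real (Suc i))) = exp (ln (real (Suc i))) * exp (ln (real (Suc i)))"
          by (simp only: mult_2 exp_add)
        also have "\<dots> = real (Suc i) * real (Suc i)" using exp_ln[of "real (Suc i)"] by (metis of_nat_0_less_iff zero_less_Suc)
        finally show ?thesis by (simp add: power2_eq_square add.commute)
      qed
      moreover have "exp (ln c) = c" using c1 by simp
      moreover have "exp (-(2 * ln (real (Suc i)) + ln c)) = inverse (exp (2 * ln (real (Suc i))) * exp (ln c))"
        by (simp only: exp_minus exp_add)
      ultimately show ?thesis by (simp add: divide_inverse)
    qed
    finally show ?thesis using assms(3) by (simp add: c_def field_simps)
  qed
  have sums: "(\<lambda>i. (2 / 3.3 * \<delta>) * (1 / (real i + 1)\<^sup>2)) sums ((2 / 3.3 * \<delta>) * (pi\<^sup>2 / 6))"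
    using sums_mult[OF inverse_squares_sums, of "2 / 3.3 * \<delta>"] by (simp add: add.commute)
  have pisq: "pi\<^sup>2 \<le> 9.9"
  proof -
    have p4: "pi \<le> 3.1416" using pi_approx(2) by simp
    have "pi * pi \<le> 3.1416 * 3.1416" using p4 pi_gt_zero
      by (intro mult_mono) auto
    moreover have "(3.1416::real) * 3.1416 \<le> 9.9" by simp
    moreover have "pi\<^sup>2 = pi * pi" by (simp add: power2_eq_square)
    ultimately show ?thesis by linarith
  qed
  have sumle: "(2 / 3.3 * \<delta>) * (pi\<^sup>2 / 6) \<le> \<delta>"
    using pisq assms(3) by (simp add: field_simps)
  have summ: "summable (\<lambda>i. prob (A i))"
    by (rule summable_comparison_test'[OF sums_summable[OF sums], of 0]) (use Abound in auto)
  have U: "prob (\<Union>i. A i) \<le> \<delta>"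
  proof -
    have "prob (\<Union>i. A i) \<le> (\<Sum>i. prob (A i))"
      using Ameas summ by (intro finite_measure_subadditive_countably) auto
    also have "\<dots> \<le> (\<Sum>i. (2 / 3.3 * \<delta>) * (1 / (real i + 1)\<^sup>2))"
      by (rule suminf_le[OF Abound summ sums_summable[OF sums]])
    also have "\<dots> \<le> \<delta>" using sums_unique[OF sums] sumle by simp
    finally show ?thesis .
  qed
  have sub: "space M - (\<Union>i. A i) \<subseteq> G"
  proof
    fix \<omega> assume w: "\<omega> \<in> space M - (\<Union>i. A i)"
    show "\<omega> \<in> G" unfolding G_def
    proof (safe)
      show "\<omega> \<in> space M" using w by auto
      fix n :: nat assume n: "n \<ge> 1"
      show "in_I \<xi> \<delta> n p \<omega>"
      proof (cases "n < 2")
        case True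
        then show ?thesis using assms(2) by (simp add: in_I_def pow2floor_def)
      next
        case False
        then obtain k where k: "k \<ge> 1" "pow2floor n = 2^k" using pow2floor_ex[of n] by auto
        then obtain i where i: "k = Suc i" by (cases k) auto
        let ?m = "(2::nat)^Suc i"
        have "\<omega> \<notin> A i" using w by auto
        then have lt: "\<bar>(\<Sum>j\<in>{1..?m}. \<xi> j \<omega>) - real ?m * p\<bar> < real ?m * e (Suc i)"
          using w unfolding A_def by (simp add: not_le)
        have "\<bar>p - phat \<xi> ?m \<omega>\<bar> = \<bar>(\<Sum>j\<in>{1..?m}. \<xi> j \<omega>) - real ?m * p\<bar> / real ?m"
        proof -
          have mpos: "real ?m > 0" by simp
          have "p - phat \<xi> ?m \<omega> = (real ?m * p - (\<Sum>j\<in>{1..?m}. \<xi> j \<omega>)) / real ?m"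
            unfolding phat_def using mpos by (simp add: diff_divide_distrib)
          then have "\<bar>p - phat \<xi> ?m \<omega>\<bar> = \<bar>real ?m * p - (\<Sum>j\<in>{1..?m}. \<xi> j \<omega>)\<bar> / real ?m"
            using mpos by (simp add: abs_divide)
          then show ?thesis by (simp add: abs_minus_commute)
        qed
        also have "\<dots> < e (Suc i)" using lt by (simp add: field_simps)
        finally have "\<bar>p - phat \<xi> ?m \<omega>\<bar> < e (Suc i)" .
        moreover have "log 2 (real ?m) = real (Suc i)"
        proof -
          have "real ?m = (2::real) ^ Suc i" by simp
          then show ?thesis using log_nat_power[of 2 2 "Suc i"] by (simp del: of_nat_Suc power_Suc)
        qed
        ultimately show ?thesis using k i assms(2)
          by (simp add: in_I_def e_def r_def c_def Let_def)
      qed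
    qed
  qed
  have Gm: "G \<in> sets M" unfolding G_def by (rule meas_good[OF assms(5)])
  have "1 - \<delta> \<le> 1 - prob (\<Union>i. A i)" using U by simp
  also have "\<dots> = prob (space M - (\<Union>i. A i))"
    using Ameas by (subst prob_compl) auto
  also have "\<dots> \<le> prob G"
    using sub Gm by (intro finite_measure_mono) auto
  finally show ?thesis unfolding G_def .
qed

end
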